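(* Let $X$ be a real linear space, $T$ an infinite index set, and $f, f_t : X \to \overline{\mathbb{R}} := \mathbb{R}\cup\{\pm\infty\}$ ($t \in T$) convex proper functions. Let $M := \bigcap_{t\in T} \operatorname{dom} f_t$. Let $v:\mathbb{R}^T\to\overline{\mathbb{R}}$ be $v(y) := \inf\{f(x) : f_t(x)\le y_t \text{ for all } t\in T\}$, where $\mathbb{R}^T$ carries the product topology, and let $\overline{v}$ denote the lower semicontinuous hull of $v$, so that $\overline{v}(0_Y) = \sup_{V} \inf_{y\in V} v(y)$, the supremum being over all neighborhoods $V$ of the origin $0_Y$ of $\mathbb{R}^T$. Let $$\sup(D) := \sup_{\lambda\in\mathbb{R}_+^{(T)}} \inf_{x\in M}\Big(f(x)+\sum_{t\in T}\lambda_t f_t(x)\Big).$$ Assume that either $\overline{v}(0_Y)\neq+\infty$ or $\sup(D)\neq-\infty$. Then $$\sup(D) = \sup_{\varepsilon>0,\ H\in\mathcal{F}(T)} \ \inf_{x\in M}\{ f(x) : f_t(x)\le\varepsilon \text{ for all } t\in H\}.$$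
   Context: $\operatorname{dom} g := \{x : g(x)<+\infty\}$; a proper function never takes the value $-\infty$ and has nonempty domain. $\mathbb{R}^{(T)}$ is the space of functions $\lambda=(\lambda_t)_{t\in T}:T\to\mathbb{R}$ with finite support $\operatorname{supp}\lambda=\{t:\lambda_t\neq0\}$, and $\mathbb{R}^{(T)}_+$ its elements with all $\lambda_t\ge0$; $\sum_{t\in T}\lambda_t f_t(x)$ means $\sum_{t\in\operatorname{supp}\lambda}\lambda_t f_t(x)$ if $\lambda\ne 0$ and $0$ if $\lambda=0$. $\mathcal{F}(T)$ is the family of nonempty finite subsets of $T$. Conventions: $\inf\emptyset=+\infty$, $\sup\emptyset=-\infty$. *)

theory Defs
  imports "HOL-Analysis.Analysis"
begin

definition edom :: "('x \<Rightarrow> ereal) \<Rightarrow> 'x set" where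
  "edom g = {x. g x < \<infinity>}"

definition econvex :: "('x::real_vector \<Rightarrow> ereal) \<Rightarrow> bool" where
  "econvex g \<longleftrightarrow> convex {(x, r::real). g x \<le> ereal r}"

definition eproper :: "('x \<Rightarrow> ereal) \<Rightarrow> bool" where
  "eproper g \<longleftrightarrow> (\<forall>x. g x \<noteq> -\<infinity>) \<and> edom g \<noteq> {}"

definition fin_nonneg :: "('t \<Rightarrow> real) set" where
  "fin_nonneg = {lam. finite {t. lam t \<noteq> 0} \<and> (\<forall>t. 0 \<le> lam t)}"

definition valfun :: "('x \<Rightarrow> ereal) \<Rightarrow> ('t \<Rightarrow> 'x \<Rightarrow> ereal) \<Rightarrow> ('t \<Rightarrow> real) \<Rightarrow> ereal" where
  "valfun f ft y = (INF x \<in> {x. \<forall>t. ft t x \<le> ereal (y t)}. f x)"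

definition lsc_hull_at0 :: "(('t \<Rightarrow> real) \<Rightarrow> ereal) \<Rightarrow> ereal" where
  "lsc_hull_at0 v = (SUP V \<in> {V. \<exists>U. open U \<and> (\<lambda>_::'t. 0::real) \<in> U \<and> U \<subseteq> V}. INF y \<in> V. v y)"

definition dual_sup :: "('x \<Rightarrow> ereal) \<Rightarrow> ('t \<Rightarrow> 'x \<Rightarrow> ereal) \<Rightarrow> ereal" where
  "dual_sup f ft = (SUP lam \<in> fin_nonneg.
      INF x \<in> (\<Inter>t. edom (ft t)). f x + (\<Sum>t\<in>{t. lam t \<noteq> 0}. ereal (lam t) * ft t x))"

end

theory Submission imports Defs begin

lemma one_dim:
  fixes C :: "'a::real_vector set" and phi g :: "'a \<Rightarrow> real"
  assumes cphi: "convex_on C phi" and cg: "convex_on C g"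
    and x0: "x0 \<in> C" "g x0 < 0"
    and feas: "\<And>x. x \<in> C \<Longrightarrow> g x \<le> 0 \<Longrightarrow> \<alpha> \<le> phi x"
  shows "\<exists>mu\<ge>0. \<forall>x\<in>C. \<alpha> \<le> phi x + mu * g x"
proof -
  have cC: "convex C" using cphi convex_on_imp_convex by blast
  define B where "B = (\<lambda>y. (phi y - \<alpha>) / (- g y)) ` {y\<in>C. g y < 0}"
  have Bne: "B \<noteq> {}" using x0 by (auto simp: B_def)
  have B0: "\<And>b. b \<in> B \<Longrightarrow> 0 \<le> b"
    using feas by (force simp: B_def intro: divide_nonneg_neg)
  have key: "(\<alpha> - phi x) / g x \<le> (phi y - \<alpha>) / (- g y)"
    if x: "x \<in> C" "g x > 0" and y: "y \<in> C" "g y < 0" for x y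
  proof -
    define D where "D = g x - g y"
    have D: "D > 0" using x y by (simp add: D_def)
    define u where "u = g x / D"
    have u: "0 \<le> u" "u \<le> 1" using x y D by (auto simp: u_def D_def field_simps)
    have u1: "1 - u = - g y / D" using D by (simp add: u_def D_def field_simps)
    define z where "z = (1 - u) *\<^sub>R x + u *\<^sub>R y"
    have zC: "z \<in> C" using cC x y u by (simp add: z_def convex_alt)
    have "g z \<le> (1 - u) * g x + u * g y" using convex_onD[OF cg u x(1) y(1)] by (simp add: z_def)
    also have "\<dots> = 0" using D by (simp add: u1 u_def D_def field_simps)
    finally have "\<alpha> \<le> phi z" using feas zC by simp
    also have "phi z \<le> (1 - u) * phi x + u * phi y" using convex_onD[OF cphi u x(1) y(1)] by (simp add: z_def)
    finally have "\<alpha> \<le> (- g y / D) * phi x + (g x / D) * phi y" by (simp only: u1) (simp add: u_def)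
    then have "\<alpha> * D \<le> - g y * phi x + g x * phi y" using D by (simp add: field_simps)
    then have "(\<alpha> - phi x) * (- g y) \<le> (phi y - \<alpha>) * g x" by (simp add: D_def algebra_simps)
    then show ?thesis using x y by (simp add: divide_simps) (simp add: algebra_simps)
  qed
  define mu where "mu = Inf B"
  have bdd: "bdd_below B" using B0 by (auto simp: bdd_below_def)
  have mu0: "0 \<le> mu" unfolding mu_def using Bne B0 by (intro cInf_greatest) auto
  have "\<alpha> \<le> phi x + mu * g x" if x: "x \<in> C" for x
  proof (cases "g x" "0::real" rule: linorder_cases)
    case less
    then have "mu \<le> (phi x - \<alpha>) / (- g x)" unfolding mu_def using bdd x
      by (intro cInf_lower) (auto simp: B_def)
    then show ?thesis using less by (simp add: field_simps)
  next
    case equal then show ?thesis using feas x by simp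
  next
    case greater
    have "(\<alpha> - phi x) / g x \<le> mu" unfolding mu_def using Bne
      using key[OF x greater] by (intro cInf_greatest) (auto simp: B_def)
    then show ?thesis using greater by (simp add: field_simps)
  qed
  then show ?thesis using mu0 by blast
qed

lemma conv_sum:
  fixes C :: "'a::real_vector set" and g :: "'i \<Rightarrow> 'a \<Rightarrow> real"
  assumes "finite H" "convex C" "\<And>i. i \<in> H \<Longrightarrow> convex_on C (g i)" "\<And>i. i \<in> H \<Longrightarrow> 0 \<le> lam i"
  shows "convex_on C (\<lambda>x. \<Sum>i\<in>H. lam i * g i x)"
  using assms
proof (induction H rule: finite_induct)
  case empty then show ?case by (simp add: convex_on_const)
next
  case (insert j H)
  then show ?case by (simp add: convex_on_add convex_on_cmul)
qed

lemma conv_sublevel: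
  fixes C :: "'a::real_vector set"
  assumes "convex_on C g"
  shows "convex {x\<in>C. g x \<le> 0}"
  unfolding convex_alt
proof (intro ballI allI impI, clarify)
  fix x y u assume *: "x \<in> C" "g x \<le> 0" "y \<in> C" "g y \<le> 0" "0 \<le> (u::real)" "u \<le> 1"
  have cC: "convex C" using assms convex_on_imp_convex by blast
  have "g ((1 - u) *\<^sub>R x + u *\<^sub>R y) \<le> (1 - u) * g x + u * g y" using convex_onD[OF assms] * by simp
  also have "\<dots> \<le> 0" using * by (simp add: add_nonpos_nonpos mult_nonneg_nonpos)
  finally show "(1 - u) *\<^sub>R x + u *\<^sub>R y \<in> C \<and> g ((1 - u) *\<^sub>R x + u *\<^sub>R y) \<le> 0"
    using cC * by (simp add: convex_alt)
qed

lemma multi_dim: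
  fixes C :: "'a::real_vector set" and phi :: "'a \<Rightarrow> real" and g :: "'i \<Rightarrow> 'a \<Rightarrow> real"
  assumes H: "finite H"
    and cphi: "convex_on C phi" and cg: "\<And>i. i \<in> H \<Longrightarrow> convex_on C (g i)"
    and x0: "x0 \<in> C" "\<And>i. i \<in> H \<Longrightarrow> g i x0 < 0"
    and feas: "\<And>x. x \<in> C \<Longrightarrow> (\<forall>i\<in>H. g i x \<le> 0) \<Longrightarrow> \<alpha> \<le> phi x"
  shows "\<exists>lam. (\<forall>i\<in>H. 0 \<le> lam i) \<and> (\<forall>x\<in>C. \<alpha> \<le> phi x + (\<Sum>i\<in>H. lam i * g i x))"
  using H cphi cg x0 feas
proof (induction H arbitrary: C phi rule: finite_induct)
  case empty
  then show ?case by auto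
next
  case (insert j H)
  define C' where "C' = {x\<in>C. g j x \<le> 0}"
  have cC: "convex C" using insert.prems(1) convex_on_imp_convex by blast
  have cgj: "convex_on C (g j)" using insert.prems(2) by simp
  have cC': "convex C'" unfolding C'_def
    by (rule conv_sublevel[OF cgj])
  have sub: "C' \<subseteq> C" by (auto simp: C'_def)
  obtain lam where lam: "\<forall>i\<in>H. 0 \<le> lam i" "\<forall>x\<in>C'. \<alpha> \<le> phi x + (\<Sum>i\<in>H. lam i * g i x)"
  proof -
    have "convex_on C' phi" using convex_on_subset[OF insert.prems(1) sub cC'] .
    moreover have "\<And>i. i \<in> H \<Longrightarrow> convex_on C' (g i)"
      using convex_on_subset[OF insert.prems(2) sub cC'] by simp
    moreover have "x0 \<in> C'" using insert.prems(3) insert.prems(4)[of j] by (simp add: C'_def)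
    moreover have "\<And>x. x \<in> C' \<Longrightarrow> \<forall>i\<in>H. g i x \<le> 0 \<Longrightarrow> \<alpha> \<le> phi x"
      using insert.prems(5) by (auto simp: C'_def)
    ultimately show ?thesis using insert.IH[of C' phi] insert.prems(4) that by blast
  qed
  define phi' where "phi' = (\<lambda>x. phi x + (\<Sum>i\<in>H. lam i * g i x))"
  have cphi': "convex_on C phi'" unfolding phi'_def
    using insert.prems(1,2) lam(1) cC insert.hyps(1)
    by (intro convex_on_add conv_sum) auto
  obtain mu where mu: "mu \<ge> 0" "\<forall>x\<in>C. \<alpha> \<le> phi' x + mu * g j x"
    using one_dim[OF cphi' cgj, of x0 \<alpha>] insert.prems lam(2) by (auto simp: C'_def phi'_def)
  have eq: "(\<Sum>i\<in>H. (lam(j := mu)) i * g i x) = (\<Sum>i\<in>H. lam i * g i x)" for x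
    using insert.hyps by (intro sum.cong) auto
  show ?case
    apply (rule exI[of _ "lam(j := mu)"])
    using insert.hyps lam(1) mu eq
    by (auto simp: phi'_def algebra_simps)
qed

lemma ea1: "(a::ereal) \<le> b + ereal e \<Longrightarrow> a + ereal (- e) \<le> b"
  by (cases a; cases b) auto
lemma ea2: "(a::ereal) + ereal (- e) \<le> b \<Longrightarrow> a \<le> b + ereal e"
  by (cases a; cases b) auto

lemma econvexD:
  assumes "econvex g" "g x \<le> ereal a" "g y \<le> ereal b" "0 \<le> u" "u \<le> 1"
  shows "g ((1 - u) *\<^sub>R x + u *\<^sub>R y) \<le> ereal ((1 - u) * a + u * b)"
proof -
  have "(1 - u) *\<^sub>R (x, a) + u *\<^sub>R (y, b) \<in> {(x, r::real). g x \<le> ereal r}"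
    using assms unfolding econvex_def convex_alt by (intro bspec[where x="(y,b)"] bspec[where x="(x,a)"]) (auto)
  then show ?thesis by simp
qed

lemma econvex_edom: "econvex g \<Longrightarrow> convex (edom g)"
  unfolding convex_alt
proof (intro ballI allI impI)
  fix x y and u :: real
  assume g: "econvex g" and x: "x \<in> edom g" and y: "y \<in> edom g" and u: "0 \<le> u \<and> u \<le> 1"
  obtain a where a: "g x \<le> ereal a" using x unfolding edom_def
    by (cases "g x") auto
  obtain b where b: "g y \<le> ereal b" using y unfolding edom_def
    by (cases "g y") auto
  show "(1 - u) *\<^sub>R x + u *\<^sub>R y \<in> edom g"
  proof -
    have "g ((1 - u) *\<^sub>R x + u *\<^sub>R y) \<le> ereal ((1 - u) * a + u * b)" using econvexD[OF g a b, of u] u by simp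
    also have "\<dots> < \<infinity>" by simp
    finally show ?thesis unfolding edom_def by simp
  qed
qed

lemma econvex_real:
  assumes g: "econvex g" and C: "convex C" and sub: "\<And>x. x \<in> C \<Longrightarrow> g x < \<infinity> \<and> g x \<noteq> -\<infinity>"
  shows "convex_on C (\<lambda>x. real_of_ereal (g x))"
proof (rule convex_onI[OF _ C])
  fix u x y assume u: "0 < (u::real)" "u < 1" and x: "x \<in> C" and y: "y \<in> C"
  have ex: "g x = ereal (real_of_ereal (g x))" using sub[OF x] by (cases "g x") auto
  have ey: "g y = ereal (real_of_ereal (g y))" using sub[OF y] by (cases "g y") auto
  have zC: "(1 - u) *\<^sub>R x + u *\<^sub>R y \<in> C" using C x y u by (simp add: convex_alt)
  have "g ((1 - u) *\<^sub>R x + u *\<^sub>R y) \<le> ereal ((1 - u) * real_of_ereal (g x) + u * real_of_ereal (g y))"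
    using econvexD[OF g, of x _ y _ u] ex ey u by simp
  then show "real_of_ereal (g ((1 - u) *\<^sub>R x + u *\<^sub>R y)) \<le> (1 - u) * real_of_ereal (g x) + u * real_of_ereal (g y)"
    using sub[OF zC] by (cases "g ((1 - u) *\<^sub>R x + u *\<^sub>R y)") auto
qed

lemma convex_on_fst:
  fixes C :: "'a::real_vector set"
  assumes "convex_on C h"
  shows "convex_on (C \<times> (UNIV::real set)) (\<lambda>z. h (fst z) + a * snd z + b)"
proof (rule convex_onI)
  show "convex (C \<times> (UNIV::real set))" using assms convex_on_imp_convex convex_Times convex_UNIV by blast
next
  fix u z w assume u: "0 < (u::real)" "u < 1" and z: "z \<in> C \<times> (UNIV::real set)" and w: "w \<in> C \<times> (UNIV::real set)"
  have "h ((1 - u) *\<^sub>R fst z + u *\<^sub>R fst w) \<le> (1 - u) * h (fst z) + u * h (fst w)"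
    using convex_onD[OF assms, of u "fst z" "fst w"] u z w by auto
  then show "h (fst ((1 - u) *\<^sub>R z + u *\<^sub>R w)) + a * snd ((1 - u) *\<^sub>R z + u *\<^sub>R w) + b
        \<le> (1 - u) * (h (fst z) + a * snd z + b) + u * (h (fst w) + a * snd w + b)"
    by (simp add: algebra_simps)
qed

theorem proposition2p1:
  fixes f :: "'x::real_vector \<Rightarrow> ereal"
    and ft :: "'t \<Rightarrow> 'x \<Rightarrow> ereal"
  assumes T_inf: "infinite (UNIV :: 't set)"
    and f_cvx: "econvex f" and f_prop: "eproper f"
    and ft_cvx: "\<And>t. econvex (ft t)" and ft_prop: "\<And>t. eproper (ft t)"
    and alt: "lsc_hull_at0 (valfun f ft) \<noteq> \<infinity> \<or> dual_sup f ft \<noteq> -\<infinity>"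
  shows "dual_sup f ft =
    (SUP p \<in> {p :: real \<times> 't set. 0 < fst p \<and> finite (snd p) \<and> snd p \<noteq> {}}.
       INF x \<in> {x \<in> (\<Inter>t. edom (ft t)). \<forall>t\<in>snd p. ft t x \<le> ereal (fst p)}. f x)"
    (is "_ = (SUP p \<in> ?Pset. ?P p)")
proof -
  define M where "M = (\<Inter>t. edom (ft t))"
  define gr where "gr = (\<lambda>t x. real_of_ereal (ft t x))"
  define C where "C = M \<inter> edom f"
  define phi where "phi = (\<lambda>x. real_of_ereal (f x))"
  define L where "L = (\<lambda>lam x. f x + (\<Sum>t\<in>{t. lam t \<noteq> 0}. ereal (lam t) * ft t x))"
  have dual: "dual_sup f ft = (SUP lam \<in> fin_nonneg. INF x\<in>M. L lam x)"
    by (simp add: dual_sup_def M_def L_def)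
  have Mi: "x \<in> M \<longleftrightarrow> (\<forall>t. ft t x < \<infinity>)" for x by (simp add: M_def edom_def)
  have fin: "ft t x = ereal (gr t x)" if "x \<in> M" for t x
    using that ft_prop[of t] unfolding Mi eproper_def gr_def by (cases "ft t x") auto
  have fneq: "f x \<noteq> -\<infinity>" for x using f_prop by (simp add: eproper_def)
  have fC: "f x = ereal (phi x)" if "x \<in> C" for x
    using that fneq[of x] unfolding C_def edom_def phi_def by (cases "f x") auto
  have fnC: "f x = \<infinity>" if "x \<in> M" "x \<notin> C" for x
    using that unfolding C_def edom_def by auto
  have cM: "convex M" unfolding M_def using ft_cvx econvex_edom by (intro convex_INT) auto
  have cC: "convex C" unfolding C_def using cM econvex_edom[OF f_cvx] by (rule convex_Int)
  have CM: "C \<subseteq> M" by (simp add: C_def)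
  have cphi: "convex_on C phi" unfolding phi_def
    using econvex_real[OF f_cvx cC] fneq by (auto simp: C_def edom_def)
  have cgr: "convex_on C (gr t)" for t unfolding gr_def
    using econvex_real[OF ft_cvx cC] ft_prop[of t] by (auto simp: C_def Mi eproper_def)
  have sumL: "(\<Sum>t\<in>{t. lam t \<noteq> 0}. ereal (lam t) * ft t x) = ereal (\<Sum>t\<in>S. lam t * gr t x)"
    if "x \<in> M" "finite S" "{t. lam t \<noteq> 0} \<subseteq> S" for lam x S
  proof -
    have "(\<Sum>t\<in>{t. lam t \<noteq> 0}. ereal (lam t) * ft t x) = (\<Sum>t\<in>{t. lam t \<noteq> 0}. ereal (lam t * gr t x))"
      using fin[OF that(1)] by (intro sum.cong) auto
    also have "\<dots> = ereal (\<Sum>t\<in>{t. lam t \<noteq> 0}. lam t * gr t x)" by (simp add: sum_ereal)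
    also have "(\<Sum>t\<in>{t. lam t \<noteq> 0}. lam t * gr t x) = (\<Sum>t\<in>S. lam t * gr t x)"
      using that by (intro sum.mono_neutral_left) auto
    finally show ?thesis .
  qed
  have LC: "L lam x = ereal (phi x + (\<Sum>t\<in>S. lam t * gr t x))"
    if "x \<in> C" "finite S" "{t. lam t \<noteq> 0} \<subseteq> S" for lam x S
    using sumL[of x S lam] that CM fC[OF that(1)] by (auto simp: L_def)
  have LnC: "L lam x = \<infinity>" if "x \<in> M" "x \<notin> C" "finite S" "{t. lam t \<noteq> 0} \<subseteq> S" for lam x S
    using sumL[of x S lam] that fnC[OF that(1,2)] by (auto simp: L_def)
  show ?thesis
  proof (rule antisym)
    show "dual_sup f ft \<le> (SUP p \<in> ?Pset. ?P p)"
      unfolding dual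
    proof (rule SUP_least)
      fix lam :: "'t \<Rightarrow> real" assume lam: "lam \<in> fin_nonneg"
      define S where "S = {t. lam t \<noteq> 0}"
      have Sf: "finite S" and lam0: "\<And>t. 0 \<le> lam t" using lam by (auto simp: fin_nonneg_def S_def)
      obtain t0 :: 't where True by blast
      define H where "H = insert t0 S"
      have Hf: "finite H" "H \<noteq> {}" "{t. lam t \<noteq> 0} \<subseteq> H" using Sf by (auto simp: H_def S_def)
      define s where "s = (\<Sum>t\<in>H. lam t)"
      have s0: "0 \<le> s" unfolding s_def using lam0 by (simp add: sum_nonneg)
      show "(INF x\<in>M. L lam x) \<le> (SUP p \<in> ?Pset. ?P p)"
      proof (rule ereal_le_epsilon2)
        fix e :: real assume e: "0 < e"
        define eps where "eps = e / (s + 1)"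
        have eps: "0 < eps" "eps * s \<le> e" using e s0 by (auto simp: eps_def field_simps)
        have pt: "(INF x\<in>M. L lam x) + ereal (- e) \<le> f x"
          if x: "x \<in> M" "\<forall>t\<in>H. ft t x \<le> ereal eps" for x
        proof -
          have "(\<Sum>t\<in>H. lam t * gr t x) \<le> (\<Sum>t\<in>H. lam t * eps)"
            using x fin[OF x(1)] lam0 by (intro sum_mono mult_left_mono) auto
          also have "\<dots> = eps * s" by (simp add: s_def sum_distrib_left mult.commute)
          finally have le: "(\<Sum>t\<in>H. lam t * gr t x) \<le> e" using eps by linarith
          have "L lam x = f x + ereal (\<Sum>t\<in>H. lam t * gr t x)"
            using sumL[OF x(1) Hf(1) Hf(3)] by (simp add: L_def)
          also have "\<dots> \<le> f x + ereal e" using le by (intro add_left_mono) simp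
          finally have "(INF x\<in>M. L lam x) \<le> f x + ereal e"
            using x(1) by (meson INF_lower order_trans)
          then show ?thesis by (rule ea1)
        qed
        have "(INF x\<in>M. L lam x) + ereal (- e) \<le> ?P (eps, H)"
          using pt by (intro INF_greatest) (auto simp: M_def)
        also have "?P (eps, H) \<le> (SUP p \<in> ?Pset. ?P p)"
          using eps Hf by (intro SUP_upper) auto
        finally show "(INF x\<in>M. L lam x) \<le> (SUP p \<in> ?Pset. ?P p) + ereal e" by (rule ea2)
      qed
    qed
  next
    show "(SUP p \<in> ?Pset. ?P p) \<le> dual_sup f ft"
    proof (rule SUP_least)
      fix p assume p: "p \<in> ?Pset"
      obtain eps H where pe: "p = (eps, H)" by (cases p)
      have eps: "0 < eps" and Hf: "finite H" "H \<noteq> {}" using p pe by auto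
      have Pdef: "?P p = (INF x \<in> {x\<in>M. \<forall>t\<in>H. ft t x \<le> ereal eps}. f x)" by (simp add: pe M_def)
      show "?P p \<le> dual_sup f ft"
      proof (cases "\<exists>x1\<in>M. f x1 < \<infinity> \<and> (\<forall>t\<in>H. ft t x1 \<le> ereal (eps / 2))")
        case True
        then obtain x1 where x1: "x1 \<in> M" "f x1 < \<infinity>" "\<forall>t\<in>H. ft t x1 \<le> ereal (eps / 2)" by blast
        have x1C: "x1 \<in> C" using x1 by (simp add: C_def edom_def)
        show ?thesis
        proof (cases "?P p = -\<infinity>")
          case True then show ?thesis by simp
        next
          case False
          have "\<forall>t\<in>H. ft t x1 \<le> ereal eps"
          proof
            fix t assume "t \<in> H"
            then have "ft t x1 \<le> ereal (eps / 2)" using x1(3) by blast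
            also have "ereal (eps / 2) \<le> ereal eps" using eps by simp
            finally show "ft t x1 \<le> ereal eps" .
          qed
          then have "?P p \<le> f x1" unfolding Pdef
            using x1(1) by (intro INF_lower) simp
          then have "?P p < \<infinity>" using x1(2) by auto
          then obtain \<alpha> where al: "?P p = ereal \<alpha>" using False by (cases "?P p") auto
          have cg': "convex_on C (\<lambda>x. gr t x + (- eps))" for t
            using cgr[of t] cC by (intro convex_on_add) (auto simp: convex_on_const)
          have gx1: "gr t x1 + (- eps) < 0" if "t \<in> H" for t
            using x1(3) that fin[OF x1(1), of t] eps by auto
          have feas: "\<alpha> \<le> phi x" if "x \<in> C" "\<forall>t\<in>H. gr t x + (- eps) \<le> 0" for x
          proof -
            have "x \<in> M" "\<forall>t\<in>H. ft t x \<le> ereal eps" using that CM fin by auto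
            then have "?P p \<le> f x" unfolding Pdef by (intro INF_lower) auto
            then show ?thesis using al fC[OF that(1)] by simp
          qed
          obtain lam where lam: "\<forall>t\<in>H. 0 \<le> lam t"
            "\<forall>x\<in>C. \<alpha> \<le> phi x + (\<Sum>t\<in>H. lam t * (gr t x + (- eps)))"
            using multi_dim[where g="\<lambda>t x. gr t x + (- eps)", OF Hf(1) cphi cg' x1C gx1 feas] by blast
          define lam' where "lam' = (\<lambda>t. if t \<in> H then lam t else 0)"
          have supp: "{t. lam' t \<noteq> 0} \<subseteq> H" by (auto simp: lam'_def)
          have lam'F: "lam' \<in> fin_nonneg"
          proof -
            have "finite {t. lam' t \<noteq> 0}" using finite_subset[OF supp Hf(1)] .
            moreover have "0 \<le> lam' t" for t using lam(1) by (simp add: lam'_def)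
            ultimately show ?thesis by (simp add: fin_nonneg_def)
          qed
          have "ereal \<alpha> \<le> L lam' x" if x: "x \<in> M" for x
          proof (cases "x \<in> C")
            case False then show ?thesis using LnC[OF x False Hf(1) supp] by simp
          next
            case True
            have "(\<Sum>t\<in>H. lam t * (gr t x + (- eps))) \<le> (\<Sum>t\<in>H. lam' t * gr t x)"
              using lam(1) eps by (intro sum_mono) (auto simp: lam'_def algebra_simps)
            then show ?thesis using LC[OF True Hf(1) supp] lam(2) True by auto
          qed
          then have "?P p \<le> (INF x\<in>M. L lam' x)" using al by (auto intro: INF_greatest)
          also have "\<dots> \<le> dual_sup f ft" unfolding dual using lam'F by (rule SUP_upper)
          finally show ?thesis .
        qed
      next
        case False
        have nofeas: "f x = \<infinity>" if "x \<in> M" "\<forall>t\<in>H. ft t x \<le> ereal (eps / 2)" for x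
          using False that by auto
        define U where "U = (\<Inter>t\<in>H. {y::'t\<Rightarrow>real. y t < eps / 2})"
        have Uo: "open U" unfolding U_def using Hf(1)
          by (intro open_INT ballI open_Collect_less continuous_on_product_coordinates continuous_on_const) auto
        have U0: "(\<lambda>_::'t. 0::real) \<in> U" using eps by (simp add: U_def)
        have "\<infinity> \<le> (INF y\<in>U. valfun f ft y)"
        proof (rule INF_greatest)
          fix y assume y: "y \<in> U"
          show "\<infinity> \<le> valfun f ft y" unfolding valfun_def
          proof (rule INF_greatest)
            fix x assume x: "x \<in> {x. \<forall>t. ft t x \<le> ereal (y t)}"
            have "x \<in> M" unfolding Mi
            proof
              fix t have "ft t x \<le> ereal (y t)" using x by simp
              also have "\<dots> < \<infinity>" by simp
              finally show "ft t x < \<infinity>" .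
            qed
            moreover have "\<forall>t\<in>H. ft t x \<le> ereal (eps / 2)"
            proof
              fix t assume t: "t \<in> H"
              have "ft t x \<le> ereal (y t)" using x by simp
              also have "\<dots> \<le> ereal (eps / 2)" using y t by (force simp: U_def)
              finally show "ft t x \<le> ereal (eps / 2)" .
            qed
            ultimately show "\<infinity> \<le> f x" using nofeas by simp
          qed
        qed
        also have "(INF y\<in>U. valfun f ft y) \<le> lsc_hull_at0 (valfun f ft)"
          unfolding lsc_hull_at0_def using Uo U0 by (intro SUP_upper) auto
        finally have "lsc_hull_at0 (valfun f ft) = \<infinity>" by simp
        with alt have dneq: "dual_sup f ft \<noteq> -\<infinity>" by simp
        obtain lam0 where lam0: "lam0 \<in> fin_nonneg" "(INF x\<in>M. L lam0 x) \<noteq> -\<infinity>"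
        proof -
          { assume "\<forall>lam\<in>fin_nonneg. (INF x\<in>M. L lam x) = -\<infinity>"
            then have "dual_sup f ft \<le> -\<infinity>" unfolding dual by (intro SUP_least) simp
            with dneq have False by simp }
          then show ?thesis using that by blast
        qed
        define I where "I = (INF x\<in>M. L lam0 x)"
        define c where "c = (if I = \<infinity> then 0 else real_of_ereal I)"
        have cI: "ereal c \<le> I" using lam0(2) unfolding I_def[symmetric] by (cases I) (auto simp: c_def)
        have cL: "ereal c \<le> L lam0 x" if "x \<in> M" for x
        proof -
          have "I \<le> L lam0 x" unfolding I_def using that by (rule INF_lower)
          then show ?thesis using cI by (rule order_trans[rotated])
        qed
        define S0 where "S0 = {t. lam0 t \<noteq> 0}"
        have S0f: "finite S0" and l0: "\<And>t. 0 \<le> lam0 t" using lam0(1) by (auto simp: fin_nonneg_def S0_def)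
        have "ereal N \<le> dual_sup f ft" for N
        proof (cases "C = {}")
          case True
          have "ereal N \<le> L lam0 x" if "x \<in> M" for x
            using LnC[OF that _ S0f] True by (simp add: S0_def)
          then have "ereal N \<le> (INF x\<in>M. L lam0 x)" by (rule INF_greatest)
          also have "\<dots> \<le> dual_sup f ft" unfolding dual using lam0(1) by (rule SUP_upper)
          finally show ?thesis .
        next
          case False
          then obtain x1 where x1: "x1 \<in> C" by blast
          define psi where "psi = (\<lambda>x. phi x + (\<Sum>t\<in>S0. lam0 t * gr t x))"
          have cpsi: "convex_on C psi" unfolding psi_def
            using cphi cgr l0 S0f cC by (intro convex_on_add conv_sum) auto
          have psic: "c \<le> psi x" if "x \<in> C" for x
            using cL[of x] LC[OF that S0f, of lam0] that CM by (auto simp: S0_def psi_def)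
          define K where "K = max 0 (4 * (N - c) / eps)"
          have K0: "0 \<le> K" by (simp add: K_def)
          have K1: "4 * (N - c) / eps \<le> K" by (simp add: K_def)
          have KN: "N - c \<le> K * eps / 4"
          proof -
            have "4 * (N - c) / eps * eps \<le> K * eps" using K1 eps by (intro mult_right_mono) auto
            then show ?thesis using eps by simp
          qed
          define C2 where "C2 = C \<times> (UNIV :: real set)"
          define s1 where "s1 = (\<Sum>t\<in>H. \<bar>gr t x1\<bar>) + 1"
          have cPhi: "convex_on C2 (\<lambda>z. psi (fst z) + K * snd z + 0)"
            unfolding C2_def by (rule convex_on_fst[OF cpsi])
          have cG: "convex_on C2 (\<lambda>z. gr t (fst z) + (-1) * snd z + (- eps / 4))" for t
            unfolding C2_def by (rule convex_on_fst[OF cgr])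
          have z1: "(x1, s1) \<in> C2" using x1 by (simp add: C2_def)
          have gz1: "gr t (fst (x1, s1)) + (-1) * snd (x1, s1) + (- eps / 4) < 0" if "t \<in> H" for t
          proof -
            have "gr t x1 \<le> \<bar>gr t x1\<bar>" by simp
            also have "\<dots> \<le> (\<Sum>t\<in>H. \<bar>gr t x1\<bar>)"
              using Hf(1) that by (intro member_le_sum) auto
            finally show ?thesis using eps by (simp add: s1_def)
          qed
          have feas2: "c + K * eps / 4 \<le> psi (fst z) + K * snd z + 0"
            if z: "z \<in> C2" "\<forall>t\<in>H. gr t (fst z) + (-1) * snd z + (- eps / 4) \<le> 0" for z
          proof -
            have xC: "fst z \<in> C" using z by (auto simp: C2_def)
            then have "\<not> (\<forall>t\<in>H. ft t (fst z) \<le> ereal (eps / 2))"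
              using nofeas[of "fst z"] fC[OF xC] CM by auto
            then obtain t where t: "t \<in> H" "\<not> ft t (fst z) \<le> ereal (eps / 2)" by blast
            have "fst z \<in> M" using xC CM by blast
            then have t2: "gr t (fst z) > eps / 2" using t(2) fin[of "fst z" t] by simp
            have "gr t (fst z) + (-1) * snd z + (- eps / 4) \<le> 0" using z(2) t(1) by blast
            then have "snd z \<ge> eps / 4" using t2 by linarith
            then have "K * (eps / 4) \<le> K * snd z" using K0 by (rule mult_left_mono)
            then have "K * eps / 4 \<le> K * snd z" by simp
            then show ?thesis using psic[OF xC] by simp
          qed
          obtain mu where mu: "\<forall>t\<in>H. 0 \<le> mu t"
            "\<forall>z\<in>C2. c + K * eps / 4 \<le> psi (fst z) + K * snd z + 0 +
               (\<Sum>t\<in>H. mu t * (gr t (fst z) + (-1) * snd z + (- eps / 4)))"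
            using multi_dim[where g="\<lambda>t z. gr t (fst z) + (-1) * snd z + (- eps / 4)" and phi="\<lambda>z. psi (fst z) + K * snd z + 0", OF Hf(1) cPhi cG z1 gz1 feas2] by blast
          define lam where "lam = (\<lambda>t. lam0 t + (if t \<in> H then mu t else 0))"
          have supp: "{t. lam t \<noteq> 0} \<subseteq> S0 \<union> H" by (auto simp: lam_def S0_def)
          have lamF: "lam \<in> fin_nonneg"
          proof -
            have "finite {t. lam t \<noteq> 0}" using finite_subset[OF supp] S0f Hf(1) by blast
            moreover have "0 \<le> lam t" for t using l0[of t] mu(1) by (simp add: lam_def)
            ultimately show ?thesis by (simp add: fin_nonneg_def)
          qed
          have "ereal N \<le> L lam x" if x: "x \<in> M" for x
          proof (cases "x \<in> C")
            case False then show ?thesis using LnC[OF x False _ supp] S0f Hf(1) by simp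
          next
            case True
            have s1: "(\<Sum>t\<in>S0 \<union> H. lam0 t * gr t x) = (\<Sum>t\<in>S0. lam0 t * gr t x)"
              using S0f Hf(1) by (intro sum.mono_neutral_right) (auto simp: S0_def)
            have s2: "(\<Sum>t\<in>S0 \<union> H. (if t \<in> H then mu t else 0) * gr t x) = (\<Sum>t\<in>H. mu t * gr t x)"
              using S0f Hf(1) by (subst sum.mono_neutral_right[of "S0 \<union> H" H]) auto
            have eq: "(\<Sum>t\<in>S0 \<union> H. lam t * gr t x) = (\<Sum>t\<in>S0. lam0 t * gr t x) + (\<Sum>t\<in>H. mu t * gr t x)"
              unfolding lam_def distrib_right sum.distrib s1 s2 ..
            have m: "c + K * eps / 4 \<le> psi x + (\<Sum>t\<in>H. mu t * (gr t x + (- eps / 4)))"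
            proof -
              have "(x, 0) \<in> C2" using True by (simp add: C2_def)
              from mu(2)[rule_format, OF this] show ?thesis by simp
            qed
            have "(\<Sum>t\<in>H. mu t * (gr t x + (- eps / 4))) \<le> (\<Sum>t\<in>H. mu t * gr t x)"
              using mu(1) eps by (intro sum_mono) (auto simp: algebra_simps)
            then have "N \<le> phi x + (\<Sum>t\<in>S0 \<union> H. lam t * gr t x)"
              using m KN unfolding eq psi_def by linarith
            then show ?thesis using LC[OF True _ supp] S0f Hf(1) by simp
          qed
          then have "ereal N \<le> (INF x\<in>M. L lam x)" by (rule INF_greatest)
          also have "\<dots> \<le> dual_sup f ft" unfolding dual using lamF by (rule SUP_upper)
          finally show ?thesis .
        qed
        then have "dual_sup f ft = \<infinity>" by (rule ereal_top)
        then show ?thesis by simp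
      qed
    qed
  qed
qed

end
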